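(* Consider the setting and the algorithm described in the context, with generated iterates $\{x^k\}$. Let $\bar x\in\mathcal{X}^*$ and suppose that $\nabla^2\psi$ is strictly continuous at $A\bar x-b$ relative to $A(\mathrm{dom}\,g)-b$ with modulus $L_\psi$, i.e. there is $\delta_0>0$ with $\|\nabla^2\psi(z)-\nabla^2\psi(z')\|\le L_\psi\|z-z'\|$ for all $z,z'\in\mathbb{B}(A\bar x-b,\delta_0)\cap(A(\mathrm{dom}\,g)-b)$; set $\varepsilon_0:=\delta_0/\|A\|$. Then for any $x^k\in\mathbb{B}(\bar x,\varepsilon_0/2)$, $\Lambda_k\le a_1L_\psi\|A\|\,\mathrm{dist}(x^k,\mathcal{X}^* )$, where $\Lambda_k:=a_1[-\lambda_{\min}(\nabla^2\psi(Ax^k-b))]_+$.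
   Context: Let $A\in\mathbb{R}^{m\times n}$ (nonzero), $b\in\mathbb{R}^m$, and let $\psi:\mathbb{R}^m\to(-\infty,\infty]$ and $g:\mathbb{R}^n\to(-\infty,\infty]$ be proper lower semicontinuous functions. Set $f(x):=\psi(Ax-b)$ and $F:=f+g$. Assume: (i) there is an open set $\mathcal{O}\supseteq\mathrm{dom}\,g$ such that $\psi$ is twice continuously differentiable on $A(\mathcal{O})-b$; (ii) $g$ is convex and continuous relative to $\mathrm{dom}\,g$; (iii) $\inf F>-\infty$ and $F$ is level bounded. $\partial$ denotes the limiting subdifferential. Let $\mathcal{P}g(x):=\arg\min_z\{\frac12\|z-x\|^2+g(z)\}$, $R(x):=x-\mathcal{P}g(x-\nabla f(x))$, $r(x):=\|R(x)\|$, $\mathcal{S}^*:=\{x\in\mathrm{dom}\,g:0\in\nabla f(x)+\partial g(x)\}$ and $\mathcal{X}^*:=\{x\in\mathcal{S}^*:\nabla^2\psi(Ax-b)\succeq0\}$. Write $[a]_+=\max(0,a)$, $\lambda_{\min}$ for the smallest eigenvalue, $\mathbb{B}(x,\delta)$ for the closed ball, $\|A\|$ for the spectral norm. Algorithm: parameters $a_1\ge1$, $a_2>0$, $\varrho\in[0,1)$, $\tau\ge\varrho$, $\eta,\beta,\sigma\in(0,1)$, $x^0\in\mathrm{dom}\,g$. At iteration $k$: $\mu_k:=a_2[r(x^k)]^{\varrho}$, $G_k:=\nabla^2 f(x^k)+a_1[-\lambda_{\min}(\nabla^2\psi(Ax^k-b))]_+A^\top A+\mu_kI$, $\Theta_k(x):=f(x^k)+\langle\nabla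 f(x^k),x-x^k\rangle+\frac12(x-x^k)^\top G_k(x-x^k)+g(x)$, $r_k(y):=\|y-\mathcal{P}g(y-\nabla f(x^k)-G_k(y-x^k))\|$. Choose $y^k\in\mathrm{dom}\,g$ with $\Theta_k(y^k)\le\Theta_k(x^k)$ and, if $\varrho\in(0,1)$, $r_k(y^k)\le\eta\min\{r(x^k),[r(x^k)]^{1+\tau}\}$; if $\varrho=0$, $\mathrm{dist}(0,\partial\Theta_k(y^k))\le\eta\, r(x^k)$. Set $d^k:=y^k-x^k$; let $m_k$ be the smallest nonnegative integer $m$ with $F(x^k)-F(x^k+\beta^md^k)\ge\sigma\beta^m\mu_k\|d^k\|^2$, $\alpha_k:=\beta^{m_k}$, and $x^{k+1}:=y^k$ if $F(y^k)<F(x^k+\alpha_kd^k)$, otherwise $x^{k+1}:=x^k+\alpha_kd^k$. The iterates $x^k$ lie in $\mathrm{dom}\,g$. *)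

theory Defs
  imports "HOL-Analysis.Analysis"
begin

definition edom :: "('a \<Rightarrow> ereal) \<Rightarrow> 'a set" where
  "edom h = {x. h x < \<infinity>}"

definition proper_fun :: "('a \<Rightarrow> ereal) \<Rightarrow> bool" where
  "proper_fun h \<longleftrightarrow> (\<exists>x. h x < \<infinity>) \<and> (\<forall>x. h x > -\<infinity>)"

definition lsc_fun :: "('a::topological_space \<Rightarrow> ereal) \<Rightarrow> bool" where
  "lsc_fun h \<longleftrightarrow> (\<forall>x X. X \<longlonglongrightarrow> x \<longrightarrow> h x \<le> liminf (\<lambda>k. h (X k)))"

definition convex_efun :: "('a::real_vector \<Rightarrow> ereal) \<Rightarrow> bool" where
  "convex_efun h \<longleftrightarrow> (\<forall>x y t. 0 \<le> t \<and> t \<le> 1 \<longrightarrow>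
      h ((1 - t) *\<^sub>R x + t *\<^sub>R y) \<le> ereal (1 - t) * h x + ereal t * h y)"

definition level_bounded :: "('a::metric_space \<Rightarrow> ereal) \<Rightarrow> bool" where
  "level_bounded h \<longleftrightarrow> (\<forall>c::real. bounded {x. h x \<le> ereal c})"

text \<open>Regular (Frechet) subdifferential: v is a regular subgradient at x iff h x is finite and
  liminf_{z->x, z~=x} (h z - h x - <v, z - x>)/|z - x| >= 0 (written out with epsilon-delta).\<close>
definition regular_subdiff :: "('a::real_inner \<Rightarrow> ereal) \<Rightarrow> 'a \<Rightarrow> 'a set" where
  "regular_subdiff h x = {v. \<bar>h x\<bar> \<noteq> \<infinity> \<and>
      (\<forall>e>0. \<exists>d>0. \<forall>z. norm (z - x) < d \<longrightarrow>
          h z \<ge> ereal (real_of_ereal (h x) + inner v (z - x) - e * norm (z - x)))}"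

definition limiting_subdiff :: "('a::real_inner \<Rightarrow> ereal) \<Rightarrow> 'a \<Rightarrow> 'a set" where
  "limiting_subdiff h x = {v. \<bar>h x\<bar> \<noteq> \<infinity> \<and>
      (\<exists>X V. X \<longlonglongrightarrow> x \<and> (\<lambda>k. h (X k)) \<longlonglongrightarrow> h x \<and> V \<longlonglongrightarrow> v \<and>
             (\<forall>k. V k \<in> regular_subdiff h (X k)))}"

text \<open>Proximal mapping of h (single-valued for proper lsc convex h).\<close>
definition prox :: "('a::real_normed_vector \<Rightarrow> ereal) \<Rightarrow> 'a \<Rightarrow> 'a" where
  "prox h x = (THE z. \<forall>w. ereal ((norm (z - x))\<^sup>2 / 2) + h z \<le> ereal ((norm (w - x))\<^sup>2 / 2) + h w)"

definition mat_eigenvalue :: "real^'n^'n \<Rightarrow> real \<Rightarrow> bool" where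
  "mat_eigenvalue M l \<longleftrightarrow> (\<exists>v. v \<noteq> 0 \<and> M *v v = l *\<^sub>R v)"

text \<open>Smallest eigenvalue (used for symmetric matrices, whose eigenvalues are real).\<close>
definition lambda_min :: "real^'n^'n \<Rightarrow> real" where
  "lambda_min M = Inf {l. mat_eigenvalue M l}"

definition spec_norm :: "real^'n^'m \<Rightarrow> real" where
  "spec_norm M = onorm (\<lambda>v. M *v v)"

definition psd :: "real^'n^'n \<Rightarrow> bool" where
  "psd M \<longleftrightarrow> (\<forall>v. 0 \<le> v \<bullet> (M *v v))"

definition fobj :: "real^'n^'m \<Rightarrow> real^'m \<Rightarrow> (real^'m \<Rightarrow> ereal) \<Rightarrow> real^'n \<Rightarrow> ereal" where
  "fobj A b psi x = psi (A *v x - b)"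

definition Fobj :: "real^'n^'m \<Rightarrow> real^'m \<Rightarrow> (real^'m \<Rightarrow> ereal) \<Rightarrow> (real^'n \<Rightarrow> ereal) \<Rightarrow> real^'n \<Rightarrow> ereal" where
  "Fobj A b psi g x = psi (A *v x - b) + g x"

definition gradf :: "real^'n^'m \<Rightarrow> real^'m \<Rightarrow> (real^'m \<Rightarrow> real^'m) \<Rightarrow> real^'n \<Rightarrow> real^'n" where
  "gradf A b gpsi x = transpose A *v gpsi (A *v x - b)"

definition hessf :: "real^'n^'m \<Rightarrow> real^'m \<Rightarrow> (real^'m \<Rightarrow> real^'m^'m) \<Rightarrow> real^'n \<Rightarrow> real^'n^'n" where
  "hessf A b Hpsi x = transpose A ** Hpsi (A *v x - b) ** A"

definition Rres :: "real^'n^'m \<Rightarrow> real^'m \<Rightarrow> (real^'m \<Rightarrow> real^'m) \<Rightarrow> (real^'n \<Rightarrow> ereal) \<Rightarrow> real^'n \<Rightarrow> real^'n" where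
  "Rres A b gpsi g x = x - prox g (x - gradf A b gpsi x)"

definition rres :: "real^'n^'m \<Rightarrow> real^'m \<Rightarrow> (real^'m \<Rightarrow> real^'m) \<Rightarrow> (real^'n \<Rightarrow> ereal) \<Rightarrow> real^'n \<Rightarrow> real" where
  "rres A b gpsi g x = norm (Rres A b gpsi g x)"

definition Sstar :: "real^'n^'m \<Rightarrow> real^'m \<Rightarrow> (real^'m \<Rightarrow> real^'m) \<Rightarrow> (real^'n \<Rightarrow> ereal) \<Rightarrow> (real^'n) set" where
  "Sstar A b gpsi g = {x \<in> edom g. 0 \<in> (\<lambda>v. gradf A b gpsi x + v) ` limiting_subdiff g x}"

definition Xstar :: "real^'n^'m \<Rightarrow> real^'m \<Rightarrow> (real^'m \<Rightarrow> real^'m) \<Rightarrow> (real^'m \<Rightarrow> real^'m^'m) \<Rightarrow> (real^'n \<Rightarrow> ereal) \<Rightarrow> (real^'n) set" where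
  "Xstar A b gpsi Hpsi g = {x \<in> Sstar A b gpsi g. psd (Hpsi (A *v x - b))}"

text \<open>mu_k = a2 * r(x^k)^rho, with the convention t^0 = 1 (Isabelle's 0 powr 0 = 0 is avoided).\<close>
definition mu_k :: "real \<Rightarrow> real \<Rightarrow> real \<Rightarrow> real" where
  "mu_k a2 rho r = a2 * (if rho = 0 then 1 else r powr rho)"

definition Lam_k :: "real \<Rightarrow> real^'m^'m \<Rightarrow> real" where
  "Lam_k a1 H = a1 * max 0 (- lambda_min H)"

definition Gmat :: "real^'n^'m \<Rightarrow> real^'m \<Rightarrow> (real^'m \<Rightarrow> real^'m^'m) \<Rightarrow> real \<Rightarrow> real \<Rightarrow> real^'n \<Rightarrow> real^'n^'n" where
  "Gmat A b Hpsi a1 mu xk = hessf A b Hpsi xk + Lam_k a1 (Hpsi (A *v xk - b)) *\<^sub>R (transpose A ** A)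
      + mu *\<^sub>R mat 1"

definition Theta :: "real^'n^'m \<Rightarrow> real^'m \<Rightarrow> (real^'m \<Rightarrow> ereal) \<Rightarrow> (real^'m \<Rightarrow> real^'m)
    \<Rightarrow> (real^'n \<Rightarrow> ereal) \<Rightarrow> real^'n^'n \<Rightarrow> real^'n \<Rightarrow> real^'n \<Rightarrow> ereal" where
  "Theta A b psi gpsi g G xk z = fobj A b psi xk
      + ereal (gradf A b gpsi xk \<bullet> (z - xk) + (z - xk) \<bullet> (G *v (z - xk)) / 2) + g z"

definition rk :: "real^'n^'m \<Rightarrow> real^'m \<Rightarrow> (real^'m \<Rightarrow> real^'m)
    \<Rightarrow> (real^'n \<Rightarrow> ereal) \<Rightarrow> real^'n^'n \<Rightarrow> real^'n \<Rightarrow> real^'n \<Rightarrow> real" where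
  "rk A b gpsi g G xk z = norm (z - prox g (z - gradf A b gpsi xk - G *v (z - xk)))"

definition armijo :: "(real^'n \<Rightarrow> ereal) \<Rightarrow> real \<Rightarrow> real \<Rightarrow> real \<Rightarrow> real^'n \<Rightarrow> real^'n \<Rightarrow> nat \<Rightarrow> bool" where
  "armijo F beta sgm mu xk d m \<longleftrightarrow>
      F (xk + (beta ^ m) *\<^sub>R d) + ereal (sgm * beta ^ m * mu * (norm d)\<^sup>2) \<le> F xk"

end

theory Submission
  imports Defs
begin

lemma line_deriv1:
  fixes F :: "real^'m \<Rightarrow> real"
  assumes "(F has_derivative (\<lambda>d. G \<bullet> d)) (at (p + s *\<^sub>R h))"
  shows "((\<lambda>s. F (p + s *\<^sub>R h)) has_real_derivative (G \<bullet> h)) (at s)"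
proof -
  have l: "((\<lambda>s. p + s *\<^sub>R h) has_derivative (\<lambda>d. d *\<^sub>R h)) (at s)"
    by (auto intro!: derivative_eq_intros)
  have "((\<lambda>s. F (p + s *\<^sub>R h)) has_derivative (\<lambda>d. G \<bullet> (d *\<^sub>R h))) (at s)"
    using has_derivative_compose[OF l assms] by simp
  then show ?thesis unfolding has_field_derivative_def
    by (rule has_derivative_eq_rhs) (auto simp: fun_eq_iff)
qed

lemma line_deriv2:
  fixes F :: "real^'m \<Rightarrow> real^'m"
  assumes "(F has_derivative (\<lambda>d. H *v d)) (at (p + s *\<^sub>R k))"
  shows "((\<lambda>s. F (p + s *\<^sub>R k) \<bullet> h) has_real_derivative ((H *v k) \<bullet> h)) (at s)"
proof -
  have l: "((\<lambda>s. p + s *\<^sub>R k) has_derivative (\<lambda>d. d *\<^sub>R k)) (at s)"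
    by (auto intro!: derivative_eq_intros)
  have "((\<lambda>s. F (p + s *\<^sub>R k)) has_derivative (\<lambda>d. H *v (d *\<^sub>R k))) (at s)"
    using has_derivative_compose[OF l assms] by simp
  then have "((\<lambda>s. F (p + s *\<^sub>R k) \<bullet> h) has_derivative (\<lambda>d. (H *v (d *\<^sub>R k)) \<bullet> h)) (at s)"
    by (rule has_derivative_inner_left)
  then show ?thesis unfolding has_field_derivative_def
    by (rule has_derivative_eq_rhs) (auto simp: fun_eq_iff matrix_vector_mult_scaleR)
qed

lemma clairaut_step:
  fixes f :: "real^'m \<Rightarrow> real" and gf :: "real^'m \<Rightarrow> real^'m" and Hf :: "real^'m \<Rightarrow> real^'m^'m"
  assumes df: "\<forall>w\<in>U. (f has_derivative (\<lambda>d. gf w \<bullet> d)) (at w)"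
    and dg: "\<forall>w\<in>U. (gf has_derivative (\<lambda>d. Hf w *v d)) (at w)"
    and t: "0 < t" and inU: "\<forall>s\<in>{0..t}. \<forall>r\<in>{0..t}. z + s *\<^sub>R h + r *\<^sub>R k \<in> U"
  shows "\<exists>s r. 0 \<le> s \<and> s \<le> t \<and> 0 \<le> r \<and> r \<le> t \<and>
     f (z + t *\<^sub>R h + t *\<^sub>R k) - f (z + t *\<^sub>R h) - f (z + t *\<^sub>R k) + f z
       = t\<^sup>2 * ((Hf (z + s *\<^sub>R h + r *\<^sub>R k) *v k) \<bullet> h)"
proof -
  define a where "a s = f (z + t *\<^sub>R k + s *\<^sub>R h) - f (z + s *\<^sub>R h)" for s
  have "\<exists>s. 0 < s \<and> s < t \<and> a t - a 0 = (t - 0) * (gf (z + t *\<^sub>R k + s *\<^sub>R h) \<bullet> h - gf (z + 0 *\<^sub>R k + s *\<^sub>R h) \<bullet> h)"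
  proof (rule MVT2[OF t])
    fix s assume s: "0 \<le> s" "s \<le> t"
    have u1: "z + t *\<^sub>R k + s *\<^sub>R h \<in> U" using inU s t by (metis add.assoc add.commute atLeastAtMost_iff less_eq_real_def order_refl)
    have u2: "z + 0 *\<^sub>R k + s *\<^sub>R h \<in> U" using inU[rule_format, of s 0] s t by (simp add: add.commute)
    show "(a has_real_derivative (gf (z + t *\<^sub>R k + s *\<^sub>R h) \<bullet> h - gf (z + 0 *\<^sub>R k + s *\<^sub>R h) \<bullet> h)) (at s)"
      unfolding a_def
      using line_deriv1[OF df[rule_format, OF u1]] line_deriv1[of f "gf (z + 0 *\<^sub>R k + s *\<^sub>R h)" z s h] df u2
      by (auto intro!: derivative_eq_intros)
  qed
  then obtain s where s: "0 < s" "s < t" and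
    eqa: "a t - a 0 = t * (gf (z + s *\<^sub>R h + t *\<^sub>R k) \<bullet> h - gf (z + s *\<^sub>R h + 0 *\<^sub>R k) \<bullet> h)"
    by (auto simp: algebra_simps)
  have "\<exists>r. 0 < r \<and> r < t \<and> gf (z + s *\<^sub>R h + t *\<^sub>R k) \<bullet> h - gf (z + s *\<^sub>R h + 0 *\<^sub>R k) \<bullet> h
      = (t - 0) * ((Hf (z + s *\<^sub>R h + r *\<^sub>R k) *v k) \<bullet> h)"
  proof (rule MVT2[OF t])
    fix r assume r: "0 \<le> r" "r \<le> t"
    have u: "z + s *\<^sub>R h + r *\<^sub>R k \<in> U" using inU s r by auto
    show "((\<lambda>r. gf (z + s *\<^sub>R h + r *\<^sub>R k) \<bullet> h) has_real_derivative ((Hf (z + s *\<^sub>R h + r *\<^sub>R k) *v k) \<bullet> h)) (at r)"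
      by (rule line_deriv2) (use dg u in auto)
  qed
  then obtain r where r: "0 < r" "r < t" and
    eqb: "gf (z + s *\<^sub>R h + t *\<^sub>R k) \<bullet> h - gf (z + s *\<^sub>R h + 0 *\<^sub>R k) \<bullet> h = t * ((Hf (z + s *\<^sub>R h + r *\<^sub>R k) *v k) \<bullet> h)"
    by auto
  have "f (z + t *\<^sub>R h + t *\<^sub>R k) - f (z + t *\<^sub>R h) - f (z + t *\<^sub>R k) + f z = a t - a 0"
    unfolding a_def by (simp add: algebra_simps)
  also have "\<dots> = t\<^sup>2 * ((Hf (z + s *\<^sub>R h + r *\<^sub>R k) *v k) \<bullet> h)"
    using eqa eqb by (simp add: power2_eq_square)
  finally show ?thesis using s r by (intro exI[of _ s] exI[of _ r]) auto
qed

lemma cont_quad: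
  fixes Hf :: "real^'m \<Rightarrow> real^'m^'m"
  assumes "continuous_on U Hf"
  shows "continuous_on U (\<lambda>x. (Hf x *v k) \<bullet> h)"
proof -
  have "bounded_linear (\<lambda>M::real^'m^'m. (M *v k) \<bullet> h)"
  proof -
    have "linear (\<lambda>M::real^'m^'m. M *v k)"
      by (rule linearI) (auto simp: vec_eq_iff matrix_vector_mult_def sum_distrib_left
          algebra_simps sum.distrib)
    then have "bounded_linear (\<lambda>M::real^'m^'m. M *v k)"
      by (simp add: linear_conv_bounded_linear)
    then show ?thesis by (intro bounded_linear_intros)
  qed
  then show ?thesis using continuous_on_compose[OF assms, of "\<lambda>M. (M *v k) \<bullet> h"]
    by (simp add: o_def linear_continuous_on)
qed

lemma hess_sym:
  fixes f :: "real^'m \<Rightarrow> real" and gf :: "real^'m \<Rightarrow> real^'m" and Hf :: "real^'m \<Rightarrow> real^'m^'m"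
  assumes df: "\<forall>w\<in>U. (f has_derivative (\<lambda>d. gf w \<bullet> d)) (at w)"
    and dg: "\<forall>w\<in>U. (gf has_derivative (\<lambda>d. Hf w *v d)) (at w)"
    and U: "open U" and hc: "continuous_on U Hf" and z: "z \<in> U"
  shows "(Hf z *v k) \<bullet> h = (Hf z *v h) \<bullet> k"
proof (rule ccontr)
  assume ne: "(Hf z *v k) \<bullet> h \<noteq> (Hf z *v h) \<bullet> k"
  define e where "e = \<bar>(Hf z *v k) \<bullet> h - (Hf z *v h) \<bullet> k\<bar> / 2"
  have e: "e > 0" using ne by (simp add: e_def)
  obtain r where r: "r > 0" "ball z r \<subseteq> U" using U z open_contains_ball by blast
  have c1: "isCont (\<lambda>x. (Hf x *v k) \<bullet> h) z"
    using cont_quad[OF hc] continuous_on_eq_continuous_at[OF U] z by blast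
  have c2: "isCont (\<lambda>x. (Hf x *v h) \<bullet> k) z"
    using cont_quad[OF hc] continuous_on_eq_continuous_at[OF U] z by blast
  obtain d1 where d1: "d1 > 0" "\<forall>x. dist x z < d1 \<longrightarrow> \<bar>(Hf x *v k) \<bullet> h - (Hf z *v k) \<bullet> h\<bar> < e"
    using c1[unfolded continuous_at_eps_delta] e by (metis dist_real_def)
  obtain d2 where d2: "d2 > 0" "\<forall>x. dist x z < d2 \<longrightarrow> \<bar>(Hf x *v h) \<bullet> k - (Hf z *v h) \<bullet> k\<bar> < e"
    using c2[unfolded continuous_at_eps_delta] e by (metis dist_real_def)
  define m where "m = min r (min d1 d2)"
  have m: "m > 0" using r d1 d2 by (simp add: m_def)
  define t where "t = m / (2 * (norm h + norm k + 1))"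
  have hk: "norm h + norm k + 1 > 0" by (simp add: add_nonneg_pos)
  have t: "t > 0" using m unfolding t_def by (intro divide_pos_pos) (use hk in auto)
  have small: "norm (s *\<^sub>R h + q *\<^sub>R k) < m" if "s \<in> {0..t}" "q \<in> {0..t}" for s q
  proof -
    have "norm (s *\<^sub>R h + q *\<^sub>R k) \<le> s * norm h + q * norm k"
      using that by (smt (verit) atLeastAtMost_iff norm_scaleR norm_triangle_ineq)
    also have "\<dots> \<le> t * norm h + t * norm k"
      using that by (intro add_mono mult_right_mono) auto
    also have "\<dots> < m"
    proof -
      have "t * (norm h + norm k) \<le> t * (2 * (norm h + norm k + 1)) / 2" using t by simp
      also have "\<dots> = m / 2" using t_def hk by simp
      finally show ?thesis using m by (simp add: distrib_left)
    qed
    finally show ?thesis .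
  qed
  have inU1: "\<forall>s\<in>{0..t}. \<forall>q\<in>{0..t}. z + s *\<^sub>R h + q *\<^sub>R k \<in> U"
  proof (intro ballI)
    fix s q assume "s \<in> {0..t}" "q \<in> {0..t}"
    then have "norm (s *\<^sub>R h + q *\<^sub>R k) < r" using small[of s q] m_def by auto
    then have "z + s *\<^sub>R h + q *\<^sub>R k \<in> ball z r" unfolding mem_ball dist_norm
      by (metis add.assoc add_diff_cancel_left' norm_minus_commute)
    then show "z + s *\<^sub>R h + q *\<^sub>R k \<in> U" using r by blast
  qed
  have inU2: "\<forall>s\<in>{0..t}. \<forall>q\<in>{0..t}. z + s *\<^sub>R k + q *\<^sub>R h \<in> U"
    using inU1 by (metis add.assoc add.commute)
  obtain s1 q1 where sq1: "0 \<le> s1" "s1 \<le> t" "0 \<le> q1" "q1 \<le> t"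
    "f (z + t *\<^sub>R h + t *\<^sub>R k) - f (z + t *\<^sub>R h) - f (z + t *\<^sub>R k) + f z
       = t\<^sup>2 * ((Hf (z + s1 *\<^sub>R h + q1 *\<^sub>R k) *v k) \<bullet> h)"
    using clairaut_step[OF df dg t inU1] by blast
  obtain s2 q2 where sq2: "0 \<le> s2" "s2 \<le> t" "0 \<le> q2" "q2 \<le> t"
    "f (z + t *\<^sub>R k + t *\<^sub>R h) - f (z + t *\<^sub>R k) - f (z + t *\<^sub>R h) + f z
       = t\<^sup>2 * ((Hf (z + s2 *\<^sub>R k + q2 *\<^sub>R h) *v h) \<bullet> k)"
    using clairaut_step[OF df dg t inU2] by blast
  have "z + t *\<^sub>R k + t *\<^sub>R h = z + t *\<^sub>R h + t *\<^sub>R k" by (simp add: algebra_simps)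
  then have eq: "(Hf (z + s1 *\<^sub>R h + q1 *\<^sub>R k) *v k) \<bullet> h = (Hf (z + s2 *\<^sub>R k + q2 *\<^sub>R h) *v h) \<bullet> k"
    using sq1(5) sq2(5) t by (simp add: algebra_simps)
  have "dist (z + s1 *\<^sub>R h + q1 *\<^sub>R k) z < d1"
    using small[of s1 q1] sq1 m_def by (auto simp: dist_norm)
  then have 1: "\<bar>(Hf (z + s1 *\<^sub>R h + q1 *\<^sub>R k) *v k) \<bullet> h - (Hf z *v k) \<bullet> h\<bar> < e" using d1 by blast
  have "dist (z + s2 *\<^sub>R k + q2 *\<^sub>R h) z < d2"
    using small[of q2 s2] sq2 m_def by (auto simp: dist_norm add.commute)
  then have 2: "\<bar>(Hf (z + s2 *\<^sub>R k + q2 *\<^sub>R h) *v h) \<bullet> k - (Hf z *v h) \<bullet> k\<bar> < e" using d2 by blast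
  have aux: "\<And>a p b q e::real. \<bar>a - p\<bar> < (e::real) \<Longrightarrow> \<bar>(b::real) - q\<bar> < e \<Longrightarrow> a = b \<Longrightarrow> e = \<bar>p - q\<bar> / 2 \<Longrightarrow> False" by (simp add: abs_if split: if_split_asm)
  show False using aux[OF 1 2 eq e_def] .
qed

lemma sym_has_eigen:
  fixes M :: "real^'n^'n"
  assumes sym: "\<And>h k. (M *v k) \<bullet> h = (M *v h) \<bullet> k"
  shows "\<exists>l. mat_eigenvalue M l"
proof -
  define S where "S = sphere (0::real^'n) 1"
  have cS: "compact S" and neS: "S \<noteq> {}" by (auto simp: S_def)
  have "continuous_on S (\<lambda>v. v \<bullet> (M *v v))"
    by (intro continuous_intros linear_continuous_on matrix_vector_mul_bounded_linear)
  then obtain v0 where v0: "v0 \<in> S" and minv: "\<forall>y\<in>S. v0 \<bullet> (M *v v0) \<le> y \<bullet> (M *v y)"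
    using continuous_attains_inf[OF cS neS] by blast
  define mu where "mu = v0 \<bullet> (M *v v0)"
  have nv0: "norm v0 = 1" using v0 by (simp add: S_def)
  have vv0: "v0 \<bullet> v0 = 1" using nv0 by (simp add: dot_square_norm power2_eq_square)
  have Qnn: "0 \<le> w \<bullet> (M *v w) - mu * (w \<bullet> w)" for w
  proof (cases "w = 0")
    case True then show ?thesis by simp
  next
    case False
    define u where "u = (1 / norm w) *\<^sub>R w"
    have "u \<in> S" using False by (simp add: S_def u_def)
    then have "mu \<le> u \<bullet> (M *v u)" using minv mu_def by blast
    also have "u \<bullet> (M *v u) = (w \<bullet> (M *v w)) / (norm w)\<^sup>2"
      by (simp add: u_def matrix_vector_mult_scaleR power2_eq_square)
    finally have "mu * (norm w)\<^sup>2 \<le> w \<bullet> (M *v w)" using False by (simp add: pos_le_divide_eq)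
    then show ?thesis by (simp add: dot_square_norm)
  qed
  define c where "c = M *v v0 - mu *\<^sub>R v0"
  define q where "q = c \<bullet> (M *v c) - mu * (c \<bullet> c)"
  have q0: "0 \<le> q" using Qnn q_def by blast
  have expand: "(v0 + t *\<^sub>R c) \<bullet> (M *v (v0 + t *\<^sub>R c)) - mu * ((v0 + t *\<^sub>R c) \<bullet> (v0 + t *\<^sub>R c))
      = 2 * t * (c \<bullet> c) + t\<^sup>2 * q" for t
  proof -
    have s1: "v0 \<bullet> (M *v c) = c \<bullet> (M *v v0)" using sym[of c v0] by (simp add: inner_commute)
    have vc: "v0 \<bullet> c = 0" using vv0 by (simp add: c_def inner_diff_right mu_def)
    have cc: "c \<bullet> c = c \<bullet> (M *v v0)"
      using vv0 by (simp add: c_def inner_diff_right inner_diff_left inner_commute algebra_simps mu_def)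
    show ?thesis unfolding q_def
      by (simp add: algebra_simps inner_add_left inner_add_right matrix_vector_right_distrib
          matrix_vector_mult_scaleR s1 power2_eq_square vv0 vc inner_commute[of c v0] flip: mu_def cc)
  qed
  define t where "t = - (c \<bullet> c) / (q + 1)"
  have "0 \<le> 2 * t * (c \<bullet> c) + t\<^sup>2 * q" using Qnn[of "v0 + t *\<^sub>R c"] expand[of t] by simp
  moreover have "2 * t * (c \<bullet> c) + t\<^sup>2 * q = (c \<bullet> c)\<^sup>2 * (- q - 2) / (q + 1)\<^sup>2"
  proof -
    have aux: "2 * (-a/Q) * a + (-a/Q)\<^sup>2 * (Q - 1) = a\<^sup>2 * (-(Q-1)-2) / Q\<^sup>2" if "Q > 0" for a Q :: real
      using that by (simp add: field_simps power2_eq_square)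
    have "q + 1 > 0" using q0 by simp
    from aux[OF this, of "c \<bullet> c"] show ?thesis unfolding t_def by simp
  qed
  ultimately have "0 \<le> (c \<bullet> c)\<^sup>2 * (- q - 2) / (q + 1)\<^sup>2" by simp
  then have "0 \<le> (c \<bullet> c)\<^sup>2 * (- q - 2)"
    using q0 by (simp add: zero_le_divide_iff)
  then have "(c \<bullet> c)\<^sup>2 * (q + 2) \<le> 0" by (simp add: algebra_simps)
  then have "(c \<bullet> c)\<^sup>2 \<le> 0" using q0 by (simp add: mult_le_0_iff)
  then have "(c \<bullet> c)\<^sup>2 = 0" by (meson order_antisym zero_le_power2)
  then have "c = 0" by simp
  then have "M *v v0 = mu *\<^sub>R v0" by (simp add: c_def)
  moreover have "v0 \<noteq> 0" using nv0 by auto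
  ultimately show ?thesis unfolding mat_eigenvalue_def by blast
qed

lemma spec_norm_bound: "norm (M *v v) \<le> spec_norm M * norm v"
  unfolding spec_norm_def using onorm[OF matrix_vector_mul_bounded_linear[of M]] by simp

lemma spec_norm_nonneg: "0 \<le> spec_norm M"
  unfolding spec_norm_def using onorm_pos_le[OF matrix_vector_mul_bounded_linear[of M]] by simp

lemma lam_bound:
  fixes M P :: "real^'n^'n"
  assumes sym: "\<And>h k. (M *v k) \<bullet> h = (M *v h) \<bullet> k" and P: "psd P" and a1: "0 \<le> a1"
  shows "Lam_k a1 M \<le> a1 * spec_norm (M - P)"
proof -
  define s where "s = spec_norm (M - P)"
  define E where "E = {l. mat_eigenvalue M l}"
  have neE: "E \<noteq> {}" using sym_has_eigen[OF sym] by (auto simp: E_def)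
  have lb: "- s \<le> l" if lE: "l \<in> E" for l
  proof -
    obtain v where v: "v \<noteq> 0" "M *v v = l *\<^sub>R v" using lE by (auto simp: E_def mat_eigenvalue_def)
    have vp: "v \<bullet> v > 0" using v by simp
    have "l * (v \<bullet> v) = v \<bullet> (M *v v)" using v by simp
    also have "\<dots> = v \<bullet> (P *v v) + v \<bullet> ((M - P) *v v)" by (simp add: matrix_vector_mult_diff_rdistrib inner_diff_right)
    also have "\<dots> \<ge> 0 + (- (norm v * (s * norm v)))"
    proof (rule add_mono)
      show "0 \<le> v \<bullet> (P *v v)" using P by (simp add: psd_def)
      have "\<bar>v \<bullet> ((M - P) *v v)\<bar> \<le> norm v * norm ((M - P) *v v)" by (rule Cauchy_Schwarz_ineq2)
      also have "\<dots> \<le> norm v * (s * norm v)" unfolding s_def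
        by (intro mult_left_mono spec_norm_bound) simp
      finally show "- (norm v * (s * norm v)) \<le> v \<bullet> ((M - P) *v v)" by linarith
    qed
    finally have "-s * (v \<bullet> v) \<le> l * (v \<bullet> v)" by (simp add: dot_square_norm power2_eq_square algebra_simps)
    then show ?thesis by (rule mult_right_le_imp_le[OF _ vp])
  qed
  have "- s \<le> lambda_min M" unfolding lambda_min_def using cInf_greatest[OF neE lb] by (simp add: E_def)
  moreover have "0 \<le> s" by (simp add: s_def spec_norm_nonneg)
  ultimately have "max 0 (- lambda_min M) \<le> s" by simp
  then show ?thesis unfolding Lam_k_def s_def using a1 by (simp add: mult_left_mono)
qed

theorem lemma4p6:
  fixes A :: "real^'n^'m" and b :: "real^'m"
    and psi :: "real^'m \<Rightarrow> ereal" and g :: "real^'n \<Rightarrow> ereal"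
    and gpsi :: "real^'m \<Rightarrow> real^'m" and Hpsi :: "real^'m \<Rightarrow> real^'m^'m"
    and Oo :: "(real^'n) set" and U :: "(real^'m) set"
    and a1 a2 rho tau eta beta sgm :: real
    and x y :: "nat \<Rightarrow> real^'n"
    and xbar :: "real^'n" and Lpsi delta0 :: real
  assumes A_nz: "A \<noteq> 0"
    and psi_proper: "proper_fun psi" and psi_lsc: "lsc_fun psi"
    and g_proper: "proper_fun g" and g_lsc: "lsc_fun g"
    (* (i) psi is C^2 on (an open neighbourhood U of) A(O) - b, O open, O \<supseteq> dom g *)
    and O_open: "open Oo" and domg_O: "edom g \<subseteq> Oo"
    and U_open: "open U" and AO_U: "(\<lambda>u. A *v u - b) ` Oo \<subseteq> U"
    and psi_fin: "\<forall>z\<in>U. psi z \<noteq> \<infinity>"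
    and psi_grad: "\<forall>z\<in>U. ((\<lambda>w. real_of_ereal (psi w)) has_derivative (\<lambda>h. gpsi z \<bullet> h)) (at z)"
    and psi_hess: "\<forall>z\<in>U. (gpsi has_derivative (\<lambda>h. Hpsi z *v h)) (at z)"
    and hess_cont: "continuous_on U Hpsi"
    (* (ii) *)
    and g_convex: "convex_efun g" and g_cont: "continuous_on (edom g) g"
    (* (iii) *)
    and F_bdd: "\<exists>c::real. \<forall>u. ereal c \<le> Fobj A b psi g u"
    and F_lb: "level_bounded (Fobj A b psi g)"
    (* parameters *)
    and a1: "1 \<le> a1" and a2: "0 < a2" and rho: "0 \<le> rho" "rho < 1" and tau: "rho \<le> tau"
    and eta: "0 < eta" "eta < 1" and beta: "0 < beta" "beta < 1" and sgm: "0 < sgm" "sgm < 1"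
    (* the iterates *)
    and x0: "x 0 \<in> edom g"
    and y_dom: "\<forall>k. y k \<in> edom g"
    and y_descent: "\<forall>k. Theta A b psi gpsi g
          (Gmat A b Hpsi a1 (mu_k a2 rho (rres A b gpsi g (x k))) (x k)) (x k) (y k)
        \<le> Theta A b psi gpsi g
          (Gmat A b Hpsi a1 (mu_k a2 rho (rres A b gpsi g (x k))) (x k)) (x k) (x k)"
    and y_inexact_pos: "0 < rho \<Longrightarrow> \<forall>k.
        rk A b gpsi g (Gmat A b Hpsi a1 (mu_k a2 rho (rres A b gpsi g (x k))) (x k)) (x k) (y k)
        \<le> eta * min (rres A b gpsi g (x k)) ((rres A b gpsi g (x k)) powr (1 + tau))"
    and y_inexact_zero: "rho = 0 \<Longrightarrow> \<forall>k.
        limiting_subdiff (Theta A b psi gpsi g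
            (Gmat A b Hpsi a1 (mu_k a2 rho (rres A b gpsi g (x k))) (x k)) (x k)) (y k) \<noteq> {} \<and>
        infdist 0 (limiting_subdiff (Theta A b psi gpsi g
            (Gmat A b Hpsi a1 (mu_k a2 rho (rres A b gpsi g (x k))) (x k)) (x k)) (y k))
        \<le> eta * rres A b gpsi g (x k)"
    and ls_exists: "\<forall>k. \<exists>m. armijo (Fobj A b psi g) beta sgm
        (mu_k a2 rho (rres A b gpsi g (x k))) (x k) (y k - x k) m"
    and x_next: "\<forall>k. x (Suc k) =
        (let alpha = beta ^ (LEAST m. armijo (Fobj A b psi g) beta sgm
                       (mu_k a2 rho (rres A b gpsi g (x k))) (x k) (y k - x k) m);
             z = x k + alpha *\<^sub>R (y k - x k)
         in if Fobj A b psi g (y k) < Fobj A b psi g z then y k else z)"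
    (* the lemma's hypotheses *)
    and xbar: "xbar \<in> Xstar A b gpsi Hpsi g"
    and Lpsi: "0 \<le> Lpsi" and delta0: "0 < delta0"
    and strict_cont: "\<forall>z\<in>cball (A *v xbar - b) delta0 \<inter> (\<lambda>u. A *v u - b) ` edom g.
        \<forall>z'\<in>cball (A *v xbar - b) delta0 \<inter> (\<lambda>u. A *v u - b) ` edom g.
          spec_norm (Hpsi z - Hpsi z') \<le> Lpsi * norm (z - z')"
  shows "\<forall>k. x k \<in> cball xbar (delta0 / spec_norm A / 2) \<longrightarrow>
      Lam_k a1 (Hpsi (A *v x k - b))
        \<le> a1 * Lpsi * spec_norm A * infdist (x k) (Xstar A b gpsi Hpsi g)"
proof (intro allI impI)
  fix k
  assume xk: "x k \<in> cball xbar (delta0 / spec_norm A / 2)"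
  have fin: "\<exists>a. g u = ereal a" if "u \<in> edom g" for u
  proof -
    have "g u < \<infinity>" using that by (simp add: edom_def)
    moreover have "g u > -\<infinity>" using g_proper by (simp add: proper_fun_def)
    ultimately show ?thesis by (cases "g u") auto
  qed
  have xdom: "x j \<in> edom g" for j
  proof (induction j)
    case 0 then show ?case using x0 .
  next
    case (Suc j)
    define al where "al = beta ^ (LEAST m. armijo (Fobj A b psi g) beta sgm
                       (mu_k a2 rho (rres A b gpsi g (x j))) (x j) (y j - x j) m)"
    have al: "0 \<le> al" "al \<le> 1" using beta by (auto simp: al_def power_le_one)
    have "x j + al *\<^sub>R (y j - x j) \<in> edom g"
    proof -
      obtain a where a: "g (x j) = ereal a" using fin Suc by blast
      obtain c where c: "g (y j) = ereal c" using fin y_dom by blast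
      have "g ((1 - al) *\<^sub>R x j + al *\<^sub>R y j) \<le> ereal (1 - al) * g (x j) + ereal al * g (y j)"
        using g_convex al unfolding convex_efun_def by blast
      also have "\<dots> = ereal ((1 - al) * a + al * c)" using a c by simp
      finally have "g ((1 - al) *\<^sub>R x j + al *\<^sub>R y j) < \<infinity>" by (auto simp: le_less_trans)
      moreover have "(1 - al) *\<^sub>R x j + al *\<^sub>R y j = x j + al *\<^sub>R (y j - x j)"
        by (simp add: algebra_simps)
      ultimately show ?thesis by (simp add: edom_def)
    qed
    then show ?case using x_next[rule_format, of j] y_dom unfolding Let_def al_def[symmetric]
      by auto
  qed
  have symH: "(Hpsi z *v kk) \<bullet> hh = (Hpsi z *v hh) \<bullet> kk" if "z \<in> U" for z hh kk
    by (rule hess_sym[OF psi_grad psi_hess U_open hess_cont that])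
  define nA where "nA = spec_norm A"
  define r where "r = delta0 / nA / 2"
  define C where "C = a1 * Lpsi * nA"
  have nA0: "0 \<le> nA" by (simp add: nA_def spec_norm_nonneg)
  have r0: "0 \<le> r" using nA0 delta0 by (simp add: r_def)
  have C0: "0 \<le> C" using nA0 a1 Lpsi by (simp add: C_def)
  have nAr: "nA * (2 * r) \<le> delta0"
    using nA0 delta0 by (cases "nA = 0") (auto simp: r_def)
  have xkr: "norm (x k - xbar) \<le> r" using xk by (simp add: r_def nA_def dist_norm norm_minus_commute)
  have xbarS: "xbar \<in> edom g" "psd (Hpsi (A *v xbar - b))"
    using xbar by (auto simp: Xstar_def Sstar_def)
  have inball: "A *v u - b \<in> cball (A *v xbar - b) delta0 \<inter> (\<lambda>u. A *v u - b) ` edom g"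
    if "u \<in> edom g" "norm (u - xbar) \<le> 2 * r" for u
  proof -
    have "norm (A *v (u - xbar)) \<le> nA * norm (u - xbar)" by (simp add: nA_def spec_norm_bound)
    also have "\<dots> \<le> nA * (2 * r)" using that nA0 by (simp add: mult_left_mono)
    finally have "norm (A *v (u - xbar)) \<le> delta0" using nAr by linarith
    then have "dist (A *v xbar - b) (A *v u - b) \<le> delta0"
      by (simp add: dist_norm matrix_vector_mult_diff_distrib norm_minus_commute)
    then show ?thesis using that by auto
  qed
  have xkU: "A *v x k - b \<in> U" using xdom[of k] domg_O AO_U by blast
  have near: "Lam_k a1 (Hpsi (A *v x k - b)) \<le> C * norm (x k - z)"
    if z: "z \<in> Xstar A b gpsi Hpsi g" "norm (z - xbar) \<le> 2 * r" for z
  proof -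
    have zd: "z \<in> edom g" "psd (Hpsi (A *v z - b))" using z by (auto simp: Xstar_def Sstar_def)
    have "Lam_k a1 (Hpsi (A *v x k - b)) \<le> a1 * spec_norm (Hpsi (A *v x k - b) - Hpsi (A *v z - b))"
      by (rule lam_bound[OF symH[OF xkU] zd(2)]) (use a1 in simp)
    also have "\<dots> \<le> a1 * (Lpsi * norm ((A *v x k - b) - (A *v z - b)))"
    proof (rule mult_left_mono)
      show "spec_norm (Hpsi (A *v x k - b) - Hpsi (A *v z - b)) \<le> Lpsi * norm ((A *v x k - b) - (A *v z - b))"
      proof -
        have m1: "A *v x k - b \<in> cball (A *v xbar - b) delta0 \<inter> (\<lambda>u. A *v u - b) ` edom g"
          using inball[OF xdom[of k]] xkr r0 by simp
        have m2: "A *v z - b \<in> cball (A *v xbar - b) delta0 \<inter> (\<lambda>u. A *v u - b) ` edom g"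
          using inball[OF zd(1) z(2)] .
        show ?thesis using strict_cont[rule_format, OF m1 m2] by simp
      qed
    qed (use a1 in simp)
    also have "norm ((A *v x k - b) - (A *v z - b)) = norm (A *v (x k - z))"
      by (simp add: matrix_vector_mult_diff_distrib)
    also have "a1 * (Lpsi * norm (A *v (x k - z))) \<le> a1 * (Lpsi * (nA * norm (x k - z)))"
      using a1 Lpsi by (intro mult_left_mono) (auto simp: nA_def spec_norm_bound)
    finally show ?thesis by (simp add: C_def algebra_simps)
  qed
  have bnd: "Lam_k a1 (Hpsi (A *v x k - b)) \<le> C * dist (x k) z"
    if z: "z \<in> Xstar A b gpsi Hpsi g" for z
  proof (cases "norm (z - xbar) \<le> 2 * r")
    case True then show ?thesis using near[OF z] by (simp add: dist_norm)
  next
    case False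
    have "Lam_k a1 (Hpsi (A *v x k - b)) \<le> C * norm (x k - xbar)"
      using near[OF xbar] r0 by simp
    also have "\<dots> \<le> C * norm (x k - z)"
    proof (rule mult_left_mono[OF _ C0])
      have "norm (z - xbar) = norm ((z - x k) + (x k - xbar))" by simp
      also have "\<dots> \<le> norm (z - x k) + norm (x k - xbar)" by (rule norm_triangle_ineq)
      finally have "norm (z - xbar) \<le> norm (x k - z) + norm (x k - xbar)"
        by (simp add: norm_minus_commute)
      then show "norm (x k - xbar) \<le> norm (x k - z)" using False xkr by linarith
    qed
    finally show ?thesis by (simp add: dist_norm)
  qed
  have neX: "Xstar A b gpsi Hpsi g \<noteq> {}" using xbar by blast
  show "Lam_k a1 (Hpsi (A *v x k - b)) \<le> a1 * Lpsi * spec_norm A * infdist (x k) (Xstar A b gpsi Hpsi g)"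
  proof (cases "C = 0")
    case True
    then have "Lam_k a1 (Hpsi (A *v x k - b)) \<le> 0" using bnd[OF xbar] by simp
    moreover have "a1 * Lpsi * spec_norm A = 0" using True by (simp add: C_def nA_def)
    ultimately show ?thesis by (metis mult_zero_left)
  next
    case False
    then have Cp: "C > 0" using C0 by simp
    have "Lam_k a1 (Hpsi (A *v x k - b)) / C \<le> infdist (x k) (Xstar A b gpsi Hpsi g)"
      unfolding infdist_notempty[OF neX]
      by (rule cINF_greatest[OF neX]) (use bnd Cp in \<open>simp add: pos_divide_le_eq mult.commute\<close>)
    then show ?thesis using Cp by (simp add: pos_divide_le_eq C_def nA_def mult.commute)
  qed
qed

end
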